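(* Consider the $n$-body problem in ${\bf S}^2$ with all masses equal to $m>0$, and let $\alpha_i=2\pi i/n$, $i=1,\dots,n$. If $n$ is odd, then for every $m>0$ and every $z\in(-1,1)$ there exist $\omega>0$ and $\omega<0$ such that ${\bf q}_i(t)=(r\cos(\omega t+\alpha_i), r\sin(\omega t+\alpha_i), z)$, $r=(1-z^2)^{1/2}$, $i=1,\dots,n$, is a solution of the equations of motion (an elliptic relative equilibrium in which the regular $n$-gon rotates in the plane $z=$ constant). If $n$ is even, the same holds for every $z\in(-1,0)\cup(0,1)$.
   Context: The $n$-body problem in ${\bf S}^2$: bodies of masses $m_1,\dots,m_n>0$ have positions ${\bf q}_i=(x_i,y_i,z_i)\in\mathbb R^3$ on the unit sphere ${\bf S}^2=\{{\bf q}:{\bf q}\cdot{\bf q}=1\}$ ($\cdot$ the Euclidean inner product), and satisfy $$\ddot{\bf q}_i=\sum_{j\ne i}\frac{m_j[{\bf q}_j-({\bf q}_i\cdot{\bf q}_j){\bf q}_i]}{[1-({\bf q}_i\cdot{\bf q}_j)^2]^{3/2}}-(\dot{\bf q}_i\cdot\dot{\bf q}_i){\bf q}_i,\qquad {\bf q}_i\cdot{\bf q}_i=1,\ \ {\bf q}_i\cdot\dot{\bf q}_i=0,$$ $i=1,\dots,n$, defined only for configurations with $({\bf q}_i\cdot{\bf q}_j)^2\ne 1$ for all $i\ne j$. *)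

theory Defs
  imports "HOL-Analysis.Analysis"
begin

definition nbody_accel ::
  "nat \<Rightarrow> (nat \<Rightarrow> real) \<Rightarrow> (nat \<Rightarrow> real^3) \<Rightarrow> (nat \<Rightarrow> real^3) \<Rightarrow> nat \<Rightarrow> real^3" where
  "nbody_accel n mass x v i =
     (\<Sum>j\<in>{1..n} - {i}.
        (mass j / (1 - (x i \<bullet> x j)^2) powr (3/2)) *\<^sub>R (x j - (x i \<bullet> x j) *\<^sub>R x i))
     - (v i \<bullet> v i) *\<^sub>R x i"

definition nbody_S2_solution ::
  "nat \<Rightarrow> (nat \<Rightarrow> real) \<Rightarrow> (nat \<Rightarrow> real \<Rightarrow> real^3) \<Rightarrow> bool" where
  "nbody_S2_solution n mass q \<longleftrightarrow>
     (\<exists>v a. \<forall>t. \<forall>i\<in>{1..n}.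
        (q i has_vector_derivative v i t) (at t) \<and>
        (v i has_vector_derivative a i t) (at t) \<and>
        q i t \<bullet> q i t = 1 \<and> q i t \<bullet> v i t = 0 \<and>
        (\<forall>j\<in>{1..n}. j \<noteq> i \<longrightarrow> (q i t \<bullet> q j t)^2 \<noteq> 1) \<and>
        a i t = nbody_accel n mass (\<lambda>j. q j t) (\<lambda>j. v j t) i)"

definition rotating_ngon :: "nat \<Rightarrow> real \<Rightarrow> real \<Rightarrow> nat \<Rightarrow> real \<Rightarrow> real^3" where
  "rotating_ngon n z w i t =
     (let r = sqrt (1 - z^2); \<alpha> = 2 * pi * real i / real n
      in vector [r * cos (w * t + \<alpha>), r * sin (w * t + \<alpha>), z])"

end

theory Submission
  imports Defs
begin

lemma inner3: "(x::real^3) \<bullet> y = x$1*y$1 + x$2*y$2 + x$3*y$3"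
  by (simp add: inner_vec_def sum_3)

lemma vec3_deriv:
  assumes "(f1 has_real_derivative d1) (at t)" "(f2 has_real_derivative d2) (at t)"
    "(f3 has_real_derivative d3) (at t)"
  shows "((\<lambda>t. vector[f1 t, f2 t, f3 t] :: real^3) has_vector_derivative vector[d1,d2,d3]) (at t)"
proof -
  have eq: "(\<lambda>t. vector[f1 t, f2 t, f3 t] :: real^3) = (\<lambda>t. f1 t *\<^sub>R vector[1,0,0] + f2 t *\<^sub>R vector[0,1,0] + f3 t *\<^sub>R vector[0,0,1])"
    by (rule ext) (simp add: vec_eq_iff forall_3)
  have e2: "vector[d1,d2,d3] = (f1 t *\<^sub>R 0 + d1 *\<^sub>R vector[1,0,0]) + (f2 t *\<^sub>R 0 + d2 *\<^sub>R vector[0,1,0]) + (f3 t *\<^sub>R 0 + d3 *\<^sub>R (vector[0,0,1]::real^3))"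
    by (simp add: vec_eq_iff forall_3)
  show ?thesis unfolding eq e2
    by (intro has_vector_derivative_add has_vector_derivative_scaleR assms has_vector_derivative_const)
qed

lemma sum_shift:
  fixes H :: "real \<Rightarrow> real \<Rightarrow> real"
  assumes "i \<in> {1..n}"
  shows "(\<Sum>j\<in>{1..n}-{i}. H (cos (2*pi*(real j - real i)/n)) (sin (2*pi*(real j - real i)/n)))
       = (\<Sum>k\<in>{1..n-1}. H (cos (2*pi*real k/n)) (sin (2*pi*real k/n)))"
proof (rule sym, rule sum.reindex_bij_witness[where j="\<lambda>k. if i+k \<le> n then i+k else i+k-n"
       and i="\<lambda>j. if j > i then j-i else j+n-i"])
  fix k assume k: "k \<in> {1..n-1}"
  show "H (cos (2*pi*(real (if i+k \<le> n then i+k else i+k-n) - real i)/n)) (sin (2*pi*(real (if i+k \<le> n then i+k else i+k-n) - real i)/n))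
     = H (cos (2*pi*real k/n)) (sin (2*pi*real k/n))"
  proof (cases "i+k \<le> n")
    case True then show ?thesis by simp
  next
    case False
    have n: "n > 0" using assms by auto
    have "2*pi*(real (i+k-n) - real i)/n + 2*pi = 2*pi*real k/n"
      using False n by (simp add: of_nat_diff field_simps)
    then have c: "cos (2*pi*(real (i+k-n) - real i)/n) = cos (2*pi*real k/n)"
      "sin (2*pi*(real (i+k-n) - real i)/n) = sin (2*pi*real k/n)"
      by (metis cos_periodic, metis sin_periodic)
    show ?thesis using False c by simp
  qed
qed (use assms in auto)

lemma sum_refl:
  fixes H :: "real \<Rightarrow> real \<Rightarrow> real"
  shows "(\<Sum>k\<in>{1..n-1}. H (cos (2*pi*real k/n)) (sin (2*pi*real k/n)))
       = (\<Sum>k\<in>{1..n-1}. H (cos (2*pi*real k/n)) (- sin (2*pi*real k/n)))"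
proof (rule sum.reindex_bij_witness[where i="\<lambda>k. n-k" and j="\<lambda>k. n-k"])
  fix k assume k: "k \<in> {1..n-1}"
  have kn: "k \<le> n" using k by auto
  have "2*pi*real (n-k)/n = 2*pi - 2*pi*real k/n"
  proof -
    have n: "real n > 0" using k by auto
    show ?thesis using n by (simp add: of_nat_diff[OF kn] field_simps)
  qed
  then show "H (cos (2*pi*real (n-k)/n)) (- sin (2*pi*real (n-k)/n)) = H (cos (2*pi*real k/n)) (sin (2*pi*real k/n))"
    by simp
qed auto

lemma key:
  fixes J :: "nat set" and \<delta> :: "nat \<Rightarrow> real" and Kc :: "real \<Rightarrow> real"
  assumes fin: "finite J" and r2: "r^2 = 1 - z^2"
    and S: "(\<Sum>j\<in>J. Kc (cos (\<delta> j)) * (1 - cos (\<delta> j))) = w^2"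
    and T: "(\<Sum>j\<in>J. Kc (cos (\<delta> j)) * sin (\<delta> j)) = 0"
  shows "vector[-r*w^2* cos th, -r*w^2* sin th, 0] =
    (\<Sum>j\<in>J. Kc (cos (\<delta> j)) *\<^sub>R (vector[r* cos(th+\<delta> j), r* sin(th+\<delta> j), z]
        - (r^2* cos(\<delta> j)+z^2) *\<^sub>R vector[r* cos th, r* sin th, z]))
    - (r^2*w^2) *\<^sub>R (vector[r* cos th, r* sin th, z]::real^3)"
proof -
  have zz: "z^2 = 1 - r^2" using r2 by simp
  have c1: "(\<Sum>j\<in>J. Kc (cos (\<delta> j)) * (r* cos(th+\<delta> j) - (r^2* cos(\<delta> j)+z^2) * (r* cos th)))
     = (\<Sum>j\<in>J. (- r*z^2* cos th) * (Kc (cos (\<delta> j)) * (1 - cos (\<delta> j))) - (r* sin th) * (Kc (cos (\<delta> j)) * sin (\<delta> j)))"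
    by (rule sum.cong) (auto simp: cos_add r2 algebra_simps)
  have c2: "(\<Sum>j\<in>J. Kc (cos (\<delta> j)) * (r* sin(th+\<delta> j) - (r^2* cos(\<delta> j)+z^2) * (r* sin th)))
     = (\<Sum>j\<in>J. (- r*z^2* sin th) * (Kc (cos (\<delta> j)) * (1 - cos (\<delta> j))) + (r* cos th) * (Kc (cos (\<delta> j)) * sin (\<delta> j)))"
    by (rule sum.cong) (auto simp: sin_add r2 algebra_simps)
  have c3: "(\<Sum>j\<in>J. Kc (cos (\<delta> j)) * (z - (r^2* cos(\<delta> j)+z^2) * z))
     = (\<Sum>j\<in>J. (z*r^2) * (Kc (cos (\<delta> j)) * (1 - cos (\<delta> j))))"
    by (rule sum.cong) (auto simp: r2 algebra_simps)
  have e1: "(\<Sum>j\<in>J. Kc (cos (\<delta> j)) * (r* cos(th+\<delta> j) - (r^2* cos(\<delta> j)+z^2) * (r* cos th))) - r^2*w^2*(r* cos th) = -r*w^2* cos th"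
    unfolding c1 sum_subtractf sum_distrib_left[symmetric] S T unfolding zz
    by (simp add: zz power2_eq_square algebra_simps)
  have e2: "(\<Sum>j\<in>J. Kc (cos (\<delta> j)) * (r* sin(th+\<delta> j) - (r^2* cos(\<delta> j)+z^2) * (r* sin th))) - r^2*w^2*(r* sin th) = -r*w^2* sin th"
    unfolding c2 sum.distrib sum_distrib_left[symmetric] S T unfolding zz
    by (simp add: zz power2_eq_square algebra_simps)
  have e3: "(\<Sum>j\<in>J. Kc (cos (\<delta> j)) * (z - (r^2* cos(\<delta> j)+z^2) * z)) - r^2*w^2*z = 0"
    unfolding c3 sum_distrib_left[symmetric] S by simp
  show ?thesis using e1 e2 e3 by (simp add: vec_eq_iff forall_3)
qed

lemma inner_rot:
  "vector[r * cos th, r * sin th, z] \<bullet> (vector[r * cos(th+d), r * sin(th+d), z] :: real^3) = r^2 * cos d + z^2"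
proof -
  have "cos d = cos (th+d) * cos th + sin (th+d) * sin th" using cos_diff[of "th+d" th] by simp
  then show ?thesis by (simp add: inner3 algebra_simps power2_eq_square)
qed

lemma ndeg:
  fixes D :: int
  assumes r2: "r^2 = 1 - z^2" and z: "z^2 < 1" and n: "n \<ge> 1" and D: "D \<noteq> 0" "\<bar>D\<bar> < int n"
    and odd: "odd n \<or> z \<noteq> 0"
  shows "(r^2 * cos (2*pi* of_int D/real n) + z^2)^2 \<noteq> 1"
proof
  let ?d = "2*pi* of_int D/real n"
  assume h: "(r^2 * cos ?d + z^2)^2 = 1"
  have rpos: "r^2 > 0" using r2 z by simp
  have nr: "real n > 0" using n by simp
  from h have "r^2 * cos ?d + z^2 = 1 \<or> r^2 * cos ?d + z^2 = -1"
    by (simp add: power2_eq_1_iff)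
  then show False
  proof
    assume "r^2 * cos ?d + z^2 = 1"
    then have "r^2 * cos ?d = r^2 * 1" using r2 by linarith
    then have "cos ?d = 1" using rpos by simp
    then obtain k :: int where "?d = k * 2 * pi" by (auto simp: cos_one_2pi_int)
    then have "of_int D = of_int k * real n" using nr by (simp add: field_simps)
    then have "real_of_int D = real_of_int (k * int n)" by simp
    then have Dk: "D = k * int n" by (simp only: of_int_eq_iff)
    show False
    proof (cases "k = 0")
      case True then show ?thesis using Dk D by simp
    next
      case False
      then have "\<bar>k\<bar> * int n \<ge> int n" using n by (simp add: mult_le_cancel_right1)
      then show ?thesis using Dk D by (simp add: abs_mult)
    qed
  next
    assume h1: "r^2 * cos ?d + z^2 = -1"
    have c1: "cos ?d + 1 \<ge> 0" using cos_ge_minus_one[of ?d] by linarith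
    have g0: "r^2 * (cos ?d + 1) \<ge> 0" using rpos c1 by (intro mult_nonneg_nonneg) auto
    have "r^2 * (cos ?d + 1) = r^2 * cos ?d + r^2" by (simp add: algebra_simps)
    then have "r^2 * (cos ?d + 1) = - 2 * z^2" using h1 r2 by linarith
    then have "z^2 \<le> 0" using g0 by linarith
    then have z0: "z = 0" by simp
    then have "cos ?d = -1" using h1 r2 by simp
    then obtain k :: int where "?d = (2*k+1) * pi" by (auto simp: cos_eq_minus1)
    then have "pi * (2 * of_int D) = pi * ((2 * of_int k + 1) * real n)" using nr by (simp add: field_simps)
    then have "2 * of_int D = (2 * of_int k + 1) * real n" by simp
    then have "real_of_int (2 * D) = real_of_int ((2*k+1) * int n)" by simp
    then have e: "2 * D = (2*k+1) * int n" by (simp only: of_int_eq_iff)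
    have "even ((2*k+1) * int n)" unfolding e[symmetric] by simp
    moreover have "odd n" using odd z0 by simp
    ultimately show False by simp
  qed
qed

lemma sol:
  fixes n :: nat and m z w :: real
  assumes n2: "n \<ge> 2" and z1: "-1 < z" "z < 1" and odd: "odd n \<or> z \<noteq> 0"
    and W: "w^2 = (\<Sum>k\<in>{1..n-1}. (m / (1 - ((sqrt (1-z^2))^2 * cos (2*pi*real k/real n) + z^2)^2) powr (3/2)) * (1 - cos (2*pi*real k/real n)))"
  shows "nbody_S2_solution n (\<lambda>_. m) (rotating_ngon n z w)"
proof -
  define r where "r = sqrt (1 - z^2)"
  have z2: "z^2 < 1" using z1 by (simp add: abs_square_less_1)
  have r2: "r^2 = 1 - z^2" using z2 by (simp add: r_def)
  define Kc where "Kc c = m / (1 - (r^2 * c + z^2)^2) powr (3/2)" for c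
  define al where "al i = 2*pi*real i/real n" for i
  have nr: "real n > 0" using n2 by simp
  have rot: "rotating_ngon n z w i = (\<lambda>t. vector[r * cos (w*t + al i), r * sin (w*t + al i), z])" for i
    by (rule ext) (simp add: rotating_ngon_def r_def al_def Let_def)
  have Sk: "(\<Sum>k\<in>{1..n-1}. Kc (cos (2*pi*real k/real n)) * (1 - cos (2*pi*real k/real n))) = w^2"
    using W by (simp add: Kc_def r_def)
  have Tk: "(\<Sum>k\<in>{1..n-1}. Kc (cos (2*pi*real k/real n)) * sin (2*pi*real k/real n)) = 0"
  proof -
    have "(\<Sum>k\<in>{1..n-1}. Kc (cos (2*pi*real k/real n)) * sin (2*pi*real k/real n))
      = (\<Sum>k\<in>{1..n-1}. Kc (cos (2*pi*real k/real n)) * (- sin (2*pi*real k/real n)))"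
      using sum_refl[of "\<lambda>c s. Kc c * s" n] by simp
    then show ?thesis by (simp add: sum_negf)
  qed
  show ?thesis
    unfolding nbody_S2_solution_def
  proof (rule exI[where x="\<lambda>i t. vector[-r*w* sin(w*t+al i), r*w* cos(w*t+al i), 0]"],
         rule exI[where x="\<lambda>i t. vector[-r*w^2* cos(w*t+al i), -r*w^2* sin(w*t+al i), 0]"],
         intro allI ballI)
    fix t i assume i: "i \<in> {1..n}"
    define th where "th = w*t + al i"
    define dl where "dl j = 2*pi*(real j - real i)/real n" for j
    have dli: "dl i = 0" by (simp add: dl_def)
    have ang: "w*t + al j = th + dl j" for j
      using nr by (simp add: th_def al_def dl_def field_simps)
    have qj: "rotating_ngon n z w j t = vector[r * cos (th + dl j), r * sin (th + dl j), z]" for j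
      by (simp add: rot ang)
    have qi: "rotating_ngon n z w i t = vector[r * cos th, r * sin th, z]"
      by (simp add: rot th_def)
    have inn: "rotating_ngon n z w i t \<bullet> rotating_ngon n z w j t = r^2 * cos (dl j) + z^2" for j
      by (subst qi, subst qj, rule inner_rot)
    have d1: "(rotating_ngon n z w i has_vector_derivative vector[-r*w* sin(w*t+al i), r*w* cos(w*t+al i), 0]) (at t)"
      unfolding rot
    proof (rule vec3_deriv)
      show "((\<lambda>t. r * cos (w*t + al i)) has_real_derivative -r*w* sin(w*t+al i)) (at t)"
        by (auto intro!: derivative_eq_intros)
      show "((\<lambda>t. r * sin (w*t + al i)) has_real_derivative r*w* cos(w*t+al i)) (at t)"
        by (auto intro!: derivative_eq_intros)
    qed simp
    have d2: "((\<lambda>t. vector[-r*w* sin(w*t+al i), r*w* cos(w*t+al i), 0] :: real^3) has_vector_derivative vector[-r*w^2* cos(w*t+al i), -r*w^2* sin(w*t+al i), 0]) (at t)"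
    proof (rule vec3_deriv)
      show "((\<lambda>t. -r*w* sin (w*t + al i)) has_real_derivative -r*w^2* cos(w*t+al i)) (at t)"
        by (auto intro!: derivative_eq_intros simp: power2_eq_square)
      show "((\<lambda>t. r*w* cos (w*t + al i)) has_real_derivative -r*w^2* sin(w*t+al i)) (at t)"
        by (auto intro!: derivative_eq_intros simp: power2_eq_square)
    qed simp
    have sc: "(sin x)^2 + (cos x)^2 = 1" for x :: real by (rule sin_cos_squared_add)
    have d3: "rotating_ngon n z w i t \<bullet> rotating_ngon n z w i t = 1"
    proof -
      have "rotating_ngon n z w i t \<bullet> rotating_ngon n z w i t = r^2 * ((sin th)^2 + (cos th)^2) + z^2"
        unfolding qi inner3 vector_3 power2_eq_square by algebra
      then show ?thesis using r2 by simp
    qed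
    have d4: "rotating_ngon n z w i t \<bullet> vector[-r*w* sin(w*t+al i), r*w* cos(w*t+al i), 0] = 0"
      unfolding qi th_def[symmetric] by (simp add: inner3 algebra_simps)
    have d5: "\<forall>j\<in>{1..n}. j \<noteq> i \<longrightarrow> (rotating_ngon n z w i t \<bullet> rotating_ngon n z w j t)^2 \<noteq> 1"
    proof (intro ballI impI)
      fix j assume j: "j \<in> {1..n}" "j \<noteq> i"
      have "dl j = 2*pi* of_int (int j - int i)/real n" by (simp add: dl_def)
      moreover have "(r^2 * cos (2*pi* of_int (int j - int i)/real n) + z^2)^2 \<noteq> 1"
        by (rule ndeg[OF r2 z2]) (use n2 i j odd in auto)
      ultimately show "(rotating_ngon n z w i t \<bullet> rotating_ngon n z w j t)^2 \<noteq> 1"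
        by (simp add: inn)
    qed
    have vv: "vector[-r*w* sin(w*t+al i), r*w* cos(w*t+al i), 0] \<bullet> (vector[-r*w* sin(w*t+al i), r*w* cos(w*t+al i), 0] :: real^3) = r^2*w^2"
    proof -
      have "vector[-r*w* sin(w*t+al i), r*w* cos(w*t+al i), 0] \<bullet> (vector[-r*w* sin(w*t+al i), r*w* cos(w*t+al i), 0] :: real^3) = r^2*w^2*((sin th)^2 + (cos th)^2)"
        unfolding th_def inner3 vector_3 power2_eq_square by algebra
      then show ?thesis by simp
    qed
    have S: "(\<Sum>j\<in>{1..n}-{i}. Kc (cos (dl j)) * (1 - cos (dl j))) = w^2"
      unfolding dl_def using sum_shift[OF i, of "\<lambda>c s. Kc c * (1 - c)"] Sk by simp
    have T: "(\<Sum>j\<in>{1..n}-{i}. Kc (cos (dl j)) * sin (dl j)) = 0"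
      unfolding dl_def using sum_shift[OF i, of "\<lambda>c s. Kc c * s"] Tk by simp
    have sumeq: "(\<Sum>j\<in>{1..n}-{i}. ((\<lambda>_. m) j / (1 - (rotating_ngon n z w i t \<bullet> rotating_ngon n z w j t)^2) powr (3/2)) *\<^sub>R
          (rotating_ngon n z w j t - (rotating_ngon n z w i t \<bullet> rotating_ngon n z w j t) *\<^sub>R rotating_ngon n z w i t))
      = (\<Sum>j\<in>{1..n}-{i}. Kc (cos (dl j)) *\<^sub>R (vector[r * cos(th+dl j), r * sin(th+dl j), z]
        - (r^2 * cos(dl j)+z^2) *\<^sub>R vector[r * cos th, r * sin th, z]))"
      by (rule sum.cong) (simp_all add: inn Kc_def qj inner_rot dli del: vector_3)
    have d6: "vector[-r*w^2* cos(w*t+al i), -r*w^2* sin(w*t+al i), 0] = nbody_accel n (\<lambda>_. m) (\<lambda>j. rotating_ngon n z w j t)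
         (\<lambda>j. vector[-r*w* sin(w*t+al j), r*w* cos(w*t+al j), 0]) i"
      unfolding nbody_accel_def unfolding sumeq unfolding vv unfolding qi th_def[symmetric]
      by (rule key[OF _ r2 S T]) simp
    show "(rotating_ngon n z w i has_vector_derivative vector[-r*w* sin(w*t+al i), r*w* cos(w*t+al i), 0]) (at t) \<and>
       ((\<lambda>t. vector[-r*w* sin(w*t+al i), r*w* cos(w*t+al i), 0] :: real^3) has_vector_derivative vector[-r*w^2* cos(w*t+al i), -r*w^2* sin(w*t+al i), 0]) (at t) \<and>
       rotating_ngon n z w i t \<bullet> rotating_ngon n z w i t = 1 \<and>
       rotating_ngon n z w i t \<bullet> vector[-r*w* sin(w*t+al i), r*w* cos(w*t+al i), 0] = 0 \<and>
       (\<forall>j\<in>{1..n}. j \<noteq> i \<longrightarrow> (rotating_ngon n z w i t \<bullet> rotating_ngon n z w j t)^2 \<noteq> 1) \<and>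
       vector[-r*w^2* cos(w*t+al i), -r*w^2* sin(w*t+al i), 0] = nbody_accel n (\<lambda>_. m) (\<lambda>j. rotating_ngon n z w j t)
         (\<lambda>j. vector[-r*w* sin(w*t+al j), r*w* cos(w*t+al j), 0]) i"
      using d1 d2 d3 d4 d5 d6 by blast
  qed
qed

theorem mainTheorem7:
  fixes n :: nat and m z :: real
  assumes "n \<ge> 2" and "m > 0" and "-1 < z" and "z < 1"
    and "odd n \<or> z \<noteq> 0"
  shows "(\<exists>w>0. nbody_S2_solution n (\<lambda>_. m) (rotating_ngon n z w)) \<and>
         (\<exists>w<0. nbody_S2_solution n (\<lambda>_. m) (rotating_ngon n z w))"
proof -
  define S where "S = (\<Sum>k\<in>{1..n-1}. (m / (1 - ((sqrt (1-z^2))^2 * cos (2*pi*real k/real n) + z^2)^2) powr (3/2)) * (1 - cos (2*pi*real k/real n)))"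
  define r where "r = sqrt (1 - z^2)"
  have z2: "z^2 < 1" using assms by (simp add: abs_square_less_1)
  have r2: "r^2 = 1 - z^2" using z2 by (simp add: r_def)
  have nr: "real n > 0" using assms by simp
  have S': "S = (\<Sum>k\<in>{1..n-1}. (m / (1 - (r^2 * cos (2*pi*real k/real n) + z^2)^2) powr (3/2)) * (1 - cos (2*pi*real k/real n)))"
    by (simp add: S_def r_def)
  have Spos: "S > 0"
    unfolding S'
  proof (rule sum_pos2[where i=1])
    show "finite {1..n-1}" by simp
    show "1 \<in> {1..n-1}" using assms by simp
    have nd: "(r^2 * cos (2*pi* of_int 1/real n) + z^2)^2 \<noteq> 1"
      by (rule ndeg[OF r2 z2]) (use assms in auto)
    then have nd1: "(r^2 * cos (2*pi*real (1::nat)/real n) + z^2)^2 \<noteq> 1" by simp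
    have "cos (2*pi*real (1::nat)/real n) \<noteq> 1"
    proof
      assume "cos (2*pi*real (1::nat)/real n) = 1"
      then show False using nd1 r2 by simp
    qed
    moreover have "cos (2*pi*real (1::nat)/real n) \<le> 1" by simp
    ultimately have c: "1 - cos (2*pi*real (1::nat)/real n) > 0" by linarith
    have "1 - (r^2 * cos (2*pi*real (1::nat)/real n) + z^2)^2 \<noteq> 0" using nd1 by simp
    then have "m / (1 - (r^2 * cos (2*pi*real (1::nat)/real n) + z^2)^2) powr (3/2) > 0"
      using assms by simp
    then show "0 < m / (1 - (r^2 * cos (2*pi*real (1::nat)/real n) + z^2)^2) powr (3/2) * (1 - cos (2*pi*real (1::nat)/real n))"
      using c by (rule mult_pos_pos)
  next
    fix k assume "k \<in> {1..n-1}"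
    have a: "m / (1 - (r^2 * cos (2*pi*real k/real n) + z^2)^2) powr (3/2) \<ge> 0"
      using assms by simp
    have b: "1 - cos (2*pi*real k/real n) \<ge> 0" by simp
    show "0 \<le> m / (1 - (r^2 * cos (2*pi*real k/real n) + z^2)^2) powr (3/2) * (1 - cos (2*pi*real k/real n))"
      using a b by (rule mult_nonneg_nonneg)
  qed
  have "nbody_S2_solution n (\<lambda>_. m) (rotating_ngon n z (sqrt S))"
    by (rule sol) (use assms Spos in \<open>simp_all add: S_def\<close>)
  moreover have "nbody_S2_solution n (\<lambda>_. m) (rotating_ngon n z (- sqrt S))"
    by (rule sol) (use assms Spos in \<open>simp_all add: S_def\<close>)
  ultimately show ?thesis using Spos by (meson neg_less_0_iff_less real_sqrt_gt_zero)
qed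

end
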